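(* Consider an execution of procedure Mis\_SWD and a phase $i$ with $0\le i<\log\Delta$. Suppose that at the beginning of phase $i$ the following invariant holds: (a) every box of the pivotal grid contains at most $\Delta/2^i$ nodes of status worker; (b) every node having a neighbor (in $G$) of status leader has status slave; (c) every node has at most $25$ neighbors of status leader, and no node has status candidate. Then, conditional on this, with probability at least $1-O(\log N)/n^3$ properties (b) and (c) hold at the beginning of phase $i+1$.
   Context: Model: $n$ nodes in the Euclidean plane with unique names in $\{1,\dots,N\}$, $N\ge n$; synchronous rounds, each node transmits or listens, no collision detection; uniform power $P$, constants $\alpha>2$, $\mathcal{N}>0$, $\beta\ge1$, $\varepsilon\in(0,1)$, $r=(P/(\mathcal{N}\beta))^{1/\alpha}$; if set $\mathcal{T}$ transmits, $u\notin\mathcal{T}$ receives from $v\in\mathcal{T}$ iff $\frac{P\,\mathrm{dist}(v,u)^{-\alpha}}{\mathcal{N}+\sum_{w\in\mathcal{T}\setminus\{v\}}P\,\mathrm{dist}(w,u)^{-\alpha}}\ge\beta$ and $\mathrm{dist}(v,u)\le(1-\varepsilon)r$. Communication graph $G$: $u\sim v$ iff $\mathrm{dist}(u,v)\le(1-\varepsilon)r$; $\Delta$ = maximum degree of $G$ (known to nodes; $\Delta$, $N$ powers of 2). Pivotal grid: partition of the plane into half-open axis-parallel boxes of side $r/\sqrt2$ with grid lines through $(0,0)$. An $(N,x)$-ssf is a family $(S_0,\dots,S_{s-1})$ of subsets of $\{1,\dots,N\}$ such that for every nonempty $Z$ with $|Z|\le x$ and every $z\in Z$ some $S_i\cap Z=\{z\}$;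 executing it, a participating node $v$ transmits in the $i$-th round iff $v\in S_i$. Procedure Mis\_SWD (synchronized start, all nodes start as workers; statuses worker, candidate, leader, slave, with leader and slave final): phases $i=0,1,\dots,\log\Delta$, each consisting of $C\log N$ sub-phases ($C$ a sufficiently large constant). Each sub-phase has two stages. Stage 1: each worker independently becomes a candidate with probability $2^i/\Delta$; candidates transmit their names by executing an $(N,c_1\log^3N)$-ssf of length $O(\log^7N)$ ($c_1$ a sufficiently large constant); a candidate that hears a message from another candidate becomes a worker again, otherwise it becomes a leader. Stage 2: the nodes that became leaders in Stage 1 transmit their names executing the same kind of ssf; every worker that hears at least one name becomes a slave, with the leader of smallest name heard as its master. *)

theory Defs
  imports "HOL-Probability.Probability"
begin

datatype status = Worker | Candidate | Leader | Slave

definition rng :: "real \<Rightarrow> real \<Rightarrow> real \<Rightarrow> real \<Rightarrow> real" where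
  "rng P \<alpha> Nz \<beta> = (P / (Nz * \<beta>)) powr (1 / \<alpha>)"

definition sinr_rcv ::
  "real \<Rightarrow> real \<Rightarrow> real \<Rightarrow> real \<Rightarrow> real \<Rightarrow> (nat \<Rightarrow> real \<times> real) \<Rightarrow> nat set \<Rightarrow> nat \<Rightarrow> nat \<Rightarrow> bool" where
  "sinr_rcv P \<alpha> Nz \<beta> \<epsilon> pos T u v \<longleftrightarrow>
     u \<notin> T \<and> v \<in> T \<and>
     P * dist (pos v) (pos u) powr (-\<alpha>) /
       (Nz + (\<Sum>w\<in>T - {v}. P * dist (pos w) (pos u) powr (-\<alpha>))) \<ge> \<beta> \<and>
     dist (pos v) (pos u) \<le> (1 - \<epsilon>) * rng P \<alpha> Nz \<beta>"

definition adj ::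
  "real \<Rightarrow> real \<Rightarrow> real \<Rightarrow> real \<Rightarrow> real \<Rightarrow> (nat \<Rightarrow> real \<times> real) \<Rightarrow> nat set \<Rightarrow> nat \<Rightarrow> nat \<Rightarrow> bool" where
  "adj P \<alpha> Nz \<beta> \<epsilon> pos V u v \<longleftrightarrow>
     u \<in> V \<and> v \<in> V \<and> u \<noteq> v \<and> dist (pos u) (pos v) \<le> (1 - \<epsilon>) * rng P \<alpha> Nz \<beta>"

definition max_degree ::
  "real \<Rightarrow> real \<Rightarrow> real \<Rightarrow> real \<Rightarrow> real \<Rightarrow> (nat \<Rightarrow> real \<times> real) \<Rightarrow> nat set \<Rightarrow> nat" where
  "max_degree P \<alpha> Nz \<beta> \<epsilon> pos V =
     Max ((\<lambda>v. card {u. adj P \<alpha> Nz \<beta> \<epsilon> pos V u v}) ` V)"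

definition pivotal_box :: "real \<Rightarrow> real \<times> real \<Rightarrow> int \<times> int" where
  "pivotal_box r p = (\<lfloor>fst p / (r / sqrt 2)\<rfloor>, \<lfloor>snd p / (r / sqrt 2)\<rfloor>)"

text \<open>(N,x)-strongly-selective family, given as a list of rounds S_0,...,S_(s-1).\<close>
definition is_ssf :: "nat \<Rightarrow> real \<Rightarrow> nat set list \<Rightarrow> bool" where
  "is_ssf N x S \<longleftrightarrow>
     (\<forall>j<length S. S ! j \<subseteq> {1..N}) \<and>
     (\<forall>Z. Z \<noteq> {} \<and> Z \<subseteq> {1..N} \<and> real (card Z) \<le> x \<longrightarrow>
          (\<forall>z\<in>Z. \<exists>j<length S. S ! j \<inter> Z = {z}))"

text \<open>Set of nodes from which u receives a message while the participants X
  execute the ssf S (in round j exactly the nodes of X \<inter> S_j transmit).\<close>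
definition heard_ssf ::
  "real \<Rightarrow> real \<Rightarrow> real \<Rightarrow> real \<Rightarrow> real \<Rightarrow> (nat \<Rightarrow> real \<times> real) \<Rightarrow> nat set list \<Rightarrow> nat set \<Rightarrow> nat \<Rightarrow> nat set" where
  "heard_ssf P \<alpha> Nz \<beta> \<epsilon> pos S X u =
     {v. \<exists>j<length S. sinr_rcv P \<alpha> Nz \<beta> \<epsilon> pos (X \<inter> S ! j) u v}"

text \<open>One sub-phase of Mis_SWD. coin v says whether v (if a worker) becomes a candidate.
  Stage 1: candidates execute S; a candidate hearing another candidate becomes a worker
  again, otherwise a leader. Stage 2: the new leaders execute S; workers hearing some
  name become slaves. (Masters are not recorded.)\<close>
definition subphase ::
  "real \<Rightarrow> real \<Rightarrow> real \<Rightarrow> real \<Rightarrow> real \<Rightarrow> (nat \<Rightarrow> real \<times> real) \<Rightarrow> nat set \<Rightarrow> nat set list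
   \<Rightarrow> (nat \<Rightarrow> status) \<Rightarrow> (nat \<Rightarrow> bool) \<Rightarrow> (nat \<Rightarrow> status)" where
  "subphase P \<alpha> Nz \<beta> \<epsilon> pos V S st coin =
     (let cand = {v\<in>V. st v = Worker \<and> coin v};
          L = {v\<in>cand. heard_ssf P \<alpha> Nz \<beta> \<epsilon> pos S cand v = {}};
          st1 = (\<lambda>v. if v \<in> L then Leader else st v);
          sl = {u\<in>V. st1 u = Worker \<and> heard_ssf P \<alpha> Nz \<beta> \<epsilon> pos S L u \<noteq> {}}
      in (\<lambda>v. if v \<in> sl then Slave else st1 v))"

primrec run_subphases ::
  "real \<Rightarrow> real \<Rightarrow> real \<Rightarrow> real \<Rightarrow> real \<Rightarrow> (nat \<Rightarrow> real \<times> real) \<Rightarrow> nat set \<Rightarrow> nat set list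
   \<Rightarrow> (nat \<Rightarrow> status) \<Rightarrow> (nat \<times> nat \<Rightarrow> bool) \<Rightarrow> nat \<Rightarrow> (nat \<Rightarrow> status)" where
  "run_subphases P \<alpha> Nz \<beta> \<epsilon> pos V S st co 0 = st"
| "run_subphases P \<alpha> Nz \<beta> \<epsilon> pos V S st co (Suc m) =
     subphase P \<alpha> Nz \<beta> \<epsilon> pos V S (run_subphases P \<alpha> Nz \<beta> \<epsilon> pos V S st co m) (\<lambda>v. co (m, v))"

definition inv_a ::
  "real \<Rightarrow> real \<Rightarrow> real \<Rightarrow> real \<Rightarrow> (nat \<Rightarrow> real \<times> real) \<Rightarrow> nat set \<Rightarrow> nat \<Rightarrow> (nat \<Rightarrow> status) \<Rightarrow> bool" where
  "inv_a P \<alpha> Nz \<beta> pos V bound st \<longleftrightarrow>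
     (\<forall>b. card {v\<in>V. st v = Worker \<and> pivotal_box (rng P \<alpha> Nz \<beta>) (pos v) = b} \<le> bound)"

definition inv_b ::
  "real \<Rightarrow> real \<Rightarrow> real \<Rightarrow> real \<Rightarrow> real \<Rightarrow> (nat \<Rightarrow> real \<times> real) \<Rightarrow> nat set \<Rightarrow> (nat \<Rightarrow> status) \<Rightarrow> bool" where
  "inv_b P \<alpha> Nz \<beta> \<epsilon> pos V st \<longleftrightarrow>
     (\<forall>u\<in>V. (\<exists>v. adj P \<alpha> Nz \<beta> \<epsilon> pos V u v \<and> st v = Leader) \<longrightarrow> st u = Slave)"

definition inv_c ::
  "real \<Rightarrow> real \<Rightarrow> real \<Rightarrow> real \<Rightarrow> real \<Rightarrow> (nat \<Rightarrow> real \<times> real) \<Rightarrow> nat set \<Rightarrow> (nat \<Rightarrow> status) \<Rightarrow> bool" where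
  "inv_c P \<alpha> Nz \<beta> \<epsilon> pos V st \<longleftrightarrow>
     (\<forall>u\<in>V. card {v. adj P \<alpha> Nz \<beta> \<epsilon> pos V u v \<and> st v = Leader} \<le> 25) \<and>
     (\<forall>u\<in>V. st u \<noteq> Candidate)"

end

theory Submission
  imports Defs
begin


lemma prob_all_true:
  assumes fin: "finite I" and TI: "T \<subseteq> I" and p: "0 \<le> p" "p \<le> 1"
  shows "measure_pmf.prob (Pi_pmf I False (\<lambda>_. bernoulli_pmf p)) {co. \<forall>b\<in>T. co b} = p ^ card T"
proof -
  define F where "F = (\<lambda>x. if x \<in> T then {True} else (UNIV::bool set))"
  have eq: "{co. \<forall>b\<in>T. co b} = Pi I F" using TI by (auto simp: F_def Pi_def)
  have "measure_pmf.prob (Pi_pmf I False (\<lambda>_. bernoulli_pmf p)) (Pi I F)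
      = (\<Prod>x\<in>I. measure_pmf.prob (bernoulli_pmf p) (F x))"
    by (rule measure_Pi_pmf_Pi[OF fin])
  also have "\<dots> = (\<Prod>x\<in>I. if x \<in> T then p else 1)"
    by (intro prod.cong) (auto simp: F_def measure_pmf_single p)
  also have "\<dots> = p ^ card T"
    using fin TI by (simp add: prod.If_cases Int_absorb1 finite_subset)
  finally show ?thesis using eq by simp
qed

lemma tail_bound:
  assumes fin: "finite I" and BI: "B \<subseteq> I" and p: "0 \<le> p" "p \<le> 1"
  shows "measure_pmf.prob (Pi_pmf I False (\<lambda>_. bernoulli_pmf p)) {co. t \<le> card {b\<in>B. co b}}
         \<le> real (card B choose t) * p ^ t"
proof -
  let ?M = "Pi_pmf I False (\<lambda>_. bernoulli_pmf p)"
  define \<T> where "\<T> = {T. T \<subseteq> B \<and> card T = t}"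
  have finB: "finite B" using fin BI finite_subset by blast
  have sub: "{co. t \<le> card {b\<in>B. co b}} \<subseteq> (\<Union>T\<in>\<T>. {co. \<forall>b\<in>T. co b})"
  proof
    fix co assume "co \<in> {co. t \<le> card {b\<in>B. co b}}"
    then obtain T where "T \<subseteq> {b\<in>B. co b}" "card T = t"
      by (auto elim: obtain_subset_with_card_n)
    then show "co \<in> (\<Union>T\<in>\<T>. {co. \<forall>b\<in>T. co b})" unfolding \<T>_def by blast
  qed
  have finT: "finite \<T>" unfolding \<T>_def using finB by (simp add: finite_Collect_subsets)
  have "measure_pmf.prob ?M {co. t \<le> card {b\<in>B. co b}} \<le> measure_pmf.prob ?M (\<Union>T\<in>\<T>. {co. \<forall>b\<in>T. co b})"
    by (rule measure_pmf.finite_measure_mono[OF sub]) simp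
  also have "\<dots> \<le> (\<Sum>T\<in>\<T>. measure_pmf.prob ?M {co. \<forall>b\<in>T. co b})"
    by (rule measure_pmf.finite_measure_subadditive_finite[OF finT]) simp
  also have "\<dots> = (\<Sum>T\<in>\<T>. p ^ t)"
    by (intro sum.cong refl) (use BI in \<open>auto simp: \<T>_def intro!: prob_all_true[OF fin _ p]\<close>)
  also have "\<dots> = real (card B choose t) * p ^ t"
    using n_subsets[OF finB, of t] by (simp add: \<T>_def)
  finally show ?thesis .
qed

lemma pow_div_fact_le_exp:
  fixes x :: real assumes "0 \<le> x" shows "x ^ n / fact n \<le> exp x"
proof -
  have "(\<Sum>m\<in>{n}. x ^ m / fact m) \<le> (\<Sum>m. x ^ m / fact m)"
    using assms summable_exp_generic[of x]
    by (intro sum_le_suminf) (auto simp: divide_inverse ac_simps)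
  also have "\<dots> = exp x" by (simp add: exp_def divide_inverse ac_simps)
  finally show ?thesis by simp
qed

lemma poisson_tail:
  fixes \<mu> :: real assumes "0 \<le> \<mu>" "6 * \<mu> \<le> real t"
  shows "\<mu> ^ t / fact t \<le> (1/2) ^ t"
proof (cases "t = 0")
  case True then show ?thesis by simp
next
  case False
  hence tp: "real t > 0" by simp
  have "\<mu> ^ t / fact t = (\<mu> / t) ^ t * (real t ^ t / fact t)"
    using tp by (simp add: power_divide)
  also have "\<dots> \<le> (\<mu> / t) ^ t * exp (real t)"
    using assms tp by (intro mult_left_mono pow_div_fact_le_exp) auto
  also have "\<dots> = (\<mu> / t * exp 1) ^ t"
  proof -
    have "exp (real t) = exp 1 ^ t" by (metis exp_of_nat_mult mult.right_neutral)
    thus ?thesis by (simp add: power_mult_distrib[symmetric])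
  qed
  also have "\<dots> \<le> (1/2) ^ t"
  proof (rule power_mono)
    have "\<mu> / t \<le> 1/6" using assms tp by (simp add: field_simps)
    moreover have "exp (1::real) \<le> 3" using exp_le by simp
    ultimately have "\<mu> / t * exp 1 \<le> 1/6 * 3"
      using assms tp by (intro mult_mono) auto
    thus "\<mu> / t * exp 1 \<le> 1/2" by simp
    show "0 \<le> \<mu> / t * exp 1" using assms tp by simp
  qed
  finally show ?thesis .
qed


definition gbox :: "real \<Rightarrow> real \<times> real \<Rightarrow> int \<times> int" where
  "gbox t p = (\<lfloor>fst p / t\<rfloor>, \<lfloor>snd p / t\<rfloor>)"

lemma floor_in_interval:
  fixes a c \<rho> t :: real assumes "\<bar>a - c\<bar> \<le> \<rho>" "t > 0"
  shows "\<lfloor>a / t\<rfloor> \<in> {\<lfloor>(c - \<rho>) / t\<rfloor>..\<lfloor>(c + \<rho>) / t\<rfloor>}"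
  using assms by (auto intro!: floor_mono divide_right_mono)

lemma card_floor_interval:
  fixes c \<rho> t :: real assumes "t > 0" "\<rho> \<ge> 0"
  shows "real (card {\<lfloor>(c - \<rho>) / t\<rfloor>..\<lfloor>(c + \<rho>) / t\<rfloor>}) \<le> 2 * \<rho> / t + 2"
proof -
  have h: "real_of_int \<lfloor>(c + \<rho>) / t\<rfloor> \<le> (c + \<rho>) / t" by (rule of_int_floor_le)
  have l: "(c - \<rho>) / t < real_of_int \<lfloor>(c - \<rho>) / t\<rfloor> + 1" by (rule real_of_int_floor_add_one_gt)
  have e: "(c + \<rho>) / t - (c - \<rho>) / t = 2 * \<rho> / t" using assms by (simp add: field_simps)
  have "real (card {\<lfloor>(c - \<rho>) / t\<rfloor>..\<lfloor>(c + \<rho>) / t\<rfloor>})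
        = real (nat (\<lfloor>(c + \<rho>) / t\<rfloor> + 1 - \<lfloor>(c - \<rho>) / t\<rfloor>))" by simp
  also have "\<dots> \<le> 2 * \<rho> / t + 2"
  proof -
    have z: "real_of_int (\<lfloor>(c + \<rho>) / t\<rfloor> + 1 - \<lfloor>(c - \<rho>) / t\<rfloor>) < 2 * \<rho> / t + 2"
      using h l e by (simp only: of_int_diff of_int_add of_int_1)
    have "0 \<le> 2 * \<rho> / t + 2" using assms by simp
    thus ?thesis using z by (cases "\<lfloor>(c + \<rho>) / t\<rfloor> + 1 - \<lfloor>(c - \<rho>) / t\<rfloor> \<ge> 0") auto
  qed
  finally show ?thesis .
qed

lemma grid_count:
  fixes q :: "'a \<Rightarrow> real \<times> real"
  assumes fin: "finite W" and t: "t > 0" and rho: "\<rho> \<ge> 0"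
    and near: "\<And>w. w \<in> W \<Longrightarrow> dist (q w) c \<le> \<rho>"
    and fib: "\<And>b. card {w\<in>W. gbox t (q w) = b} \<le> m"
  shows "real (card W) \<le> real m * (2 * \<rho> / t + 2)^2"
proof -
  define I1 where "I1 = {\<lfloor>(fst c - \<rho>) / t\<rfloor>..\<lfloor>(fst c + \<rho>) / t\<rfloor>}"
  define I2 where "I2 = {\<lfloor>(snd c - \<rho>) / t\<rfloor>..\<lfloor>(snd c + \<rho>) / t\<rfloor>}"
  have inb: "gbox t (q w) \<in> I1 \<times> I2" if "w \<in> W" for w
  proof -
    have "dist (fst (q w)) (fst c) \<le> \<rho>" using dist_fst_le near[OF that] order_trans by blast
    hence 1: "\<bar>fst (q w) - fst c\<bar> \<le> \<rho>" by (simp add: dist_real_def)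
    have "dist (snd (q w)) (snd c) \<le> \<rho>" using dist_snd_le near[OF that] order_trans by blast
    hence 2: "\<bar>snd (q w) - snd c\<bar> \<le> \<rho>" by (simp add: dist_real_def)
    show ?thesis using floor_in_interval[OF 1 t] floor_in_interval[OF 2 t]
      by (simp add: gbox_def I1_def I2_def)
  qed
  have eqW: "W = (\<Union>b\<in>I1 \<times> I2. {w\<in>W. gbox t (q w) = b})" using inb by blast
  have finI: "finite (I1 \<times> I2)" by (simp add: I1_def I2_def)
  have "card W = card (\<Union>b\<in>I1 \<times> I2. {w\<in>W. gbox t (q w) = b})" using eqW by simp
  also have "\<dots> \<le> (\<Sum>b\<in>I1 \<times> I2. card {w\<in>W. gbox t (q w) = b})"
    by (rule card_UN_le[OF finI])
  also have "\<dots> \<le> (\<Sum>b\<in>I1 \<times> I2. m)" by (intro sum_mono fib)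
  also have "\<dots> = m * (card I1 * card I2)" by (simp add: card_cartesian_product)
  finally have "real (card W) \<le> real (m * (card I1 * card I2))" by (simp only: of_nat_le_iff)
  also have "\<dots> = real m * (real (card I1) * real (card I2))" by simp
  also have "\<dots> \<le> real m * ((2 * \<rho> / t + 2) * (2 * \<rho> / t + 2))"
    using card_floor_interval[OF t rho, of "fst c"] card_floor_interval[OF t rho, of "snd c"]
    by (intro mult_left_mono mult_mono) (auto simp: I1_def I2_def)
  finally show ?thesis by (simp add: power2_eq_square)
qed

lemma floor_eq_close:
  fixes u v :: real assumes "\<lfloor>u\<rfloor> = \<lfloor>v\<rfloor>" shows "\<bar>u - v\<bar> < 1"
proof -
  have 1: "real_of_int \<lfloor>u\<rfloor> \<le> u" "u < real_of_int \<lfloor>u\<rfloor> + 1" by (rule of_int_floor_le, rule real_of_int_floor_add_one_gt)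
  have 2: "real_of_int \<lfloor>v\<rfloor> \<le> v" "v < real_of_int \<lfloor>v\<rfloor> + 1" by (rule of_int_floor_le, rule real_of_int_floor_add_one_gt)
  have 3: "real_of_int \<lfloor>u\<rfloor> = real_of_int \<lfloor>v\<rfloor>" using assms by simp
  show ?thesis unfolding abs_less_iff using 1 2 3 by linarith
qed

lemma same_gbox_close:
  assumes t: "t > 0" and g: "gbox t x = gbox t y"
  shows "dist x y < sqrt 2 * t"
proof -
  obtain a b where x: "x = (a, b)" by (cases x)
  obtain a' b' where y: "y = (a', b')" by (cases y)
  have "\<lfloor>a/t\<rfloor> = \<lfloor>a'/t\<rfloor>" "\<lfloor>b/t\<rfloor> = \<lfloor>b'/t\<rfloor>" using g by (auto simp: gbox_def x y)
  hence h: "\<bar>a/t - a'/t\<bar> < 1" "\<bar>b/t - b'/t\<bar> < 1" by (simp_all add: floor_eq_close)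
  have e0: "a/t - a'/t = (a - a')/t" "b/t - b'/t = (b - b')/t" by (rule diff_divide_distrib[symmetric])+
  have e: "\<bar>a/t - a'/t\<bar> = \<bar>a - a'\<bar> / t" "\<bar>b/t - b'/t\<bar> = \<bar>b - b'\<bar> / t"
    by (simp_all only: e0 abs_divide abs_of_pos[OF t])
  have l: "\<bar>a - a'\<bar> < t" "\<bar>b - b'\<bar> < t"
    using h unfolding e pos_divide_less_eq[OF t] by simp_all
  have "\<bar>a - a'\<bar>^2 < t^2" by (rule power_strict_mono[OF l(1) abs_ge_zero]) simp
  moreover have "\<bar>b - b'\<bar>^2 < t^2" by (rule power_strict_mono[OF l(2) abs_ge_zero]) simp
  ultimately have q: "(a - a')^2 < t^2" "(b - b')^2 < t^2" by simp_all
  have s2: "(sqrt 2 * t)^2 = 2 * t^2" by (simp add: power_mult_distrib)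
  have "(a - a')^2 + (b - b')^2 < (sqrt 2 * t)^2" using q s2 by linarith
  hence "sqrt ((a - a')^2 + (b - b')^2) < sqrt ((sqrt 2 * t)^2)" by (simp only: real_sqrt_less_iff)
  moreover have "sqrt ((sqrt 2 * t)^2) = sqrt 2 * t" using t by simp
  moreover have "dist x y = sqrt ((a - a')^2 + (b - b')^2)" by (simp add: x y dist_Pair_Pair dist_real_def)
  ultimately show ?thesis by simp
qed

lemma packing25:
  fixes q :: "'a \<Rightarrow> real \<times> real"
  assumes fin: "finite W" and d: "d > 0"
    and near: "\<And>w. w \<in> W \<Longrightarrow> dist (q w) c \<le> d"
    and far: "\<And>w w'. w \<in> W \<Longrightarrow> w' \<in> W \<Longrightarrow> w \<noteq> w' \<Longrightarrow> dist (q w) (q w') > d"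
  shows "card W \<le> 25"
proof -
  define t where "t = 7/10 * d"
  have t: "t > 0" using d by (simp add: t_def)
  have fib: "card {w\<in>W. gbox t (q w) = b} \<le> 1" for b
  proof -
    have "x = y" if "x \<in> {w\<in>W. gbox t (q w) = b}" "y \<in> {w\<in>W. gbox t (q w) = b}" for x y
    proof (rule ccontr)
      assume "x \<noteq> y"
      hence "dist (q x) (q y) > d" using far that by auto
      moreover have "dist (q x) (q y) < sqrt 2 * t" using same_gbox_close[OF t] that by auto
      moreover have "sqrt 2 * t \<le> d"
      proof -
        have "sqrt 2 \<le> 10/7" by (rule real_le_lsqrt) (auto simp: power2_eq_square)
        thus ?thesis using d by (simp add: t_def)
      qed
      ultimately show False by simp
    qed
    moreover have fin': "finite {w\<in>W. gbox t (q w) = b}" using fin by simp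
    ultimately show ?thesis unfolding One_nat_def card_le_Suc0_iff_eq[OF fin'] by blast
  qed
  have c1: "real (card W) \<le> real 1 * (2 * d / t + 2)^2" by (rule grid_count[OF fin t _ near fib]) (use d in simp)
  have "2 * d / t = 20/7" using d by (simp add: t_def)
  hence "real 1 * (2 * d / t + 2)^2 = (34/7)^2" by simp
  with c1 have "real (card W) \<le> (34/7)^2" by simp
  also have "\<dots> \<le> 25" by (simp add: power2_eq_square)
  finally have "real (card W) \<le> 25" .
  thus ?thesis by simp
qed


lemma powr_neg_antimono:
  fixes x y a :: real assumes "0 < x" "x \<le> y" "0 \<le> a"
  shows "y powr (-a) \<le> x powr (-a)"
proof -
  have "x powr a \<le> y powr a" using assms by (intro powr_mono2) auto
  moreover have "0 < x powr a" using assms by simp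
  ultimately show ?thesis by (simp add: powr_minus_divide frac_le)
qed

locale sw =
  fixes P \<alpha> Nz \<beta> \<epsilon> :: real and pos :: "nat \<Rightarrow> real \<times> real" and V :: "nat set"
    and S :: "nat set list" and N :: nat and x :: real
  assumes P: "P > 0" and alpha: "\<alpha> > 2" and Nz: "Nz > 0" and beta: "\<beta> \<ge> 1"
    and eps: "0 < \<epsilon>" "\<epsilon> < 1"
    and finV: "finite V" and inj: "inj_on pos V" and VN: "V \<subseteq> {1..N}" and ssf: "is_ssf N x S"
begin

definition "r = rng P \<alpha> Nz \<beta>"
definition "d0 = (1 - \<epsilon>) * r"
definition "\<theta> = Nz * ((1 - \<epsilon>) powr (-\<alpha>) - 1)"

definition far_intf :: "nat set \<Rightarrow> (nat \<Rightarrow> bool) \<Rightarrow> real \<Rightarrow> nat \<Rightarrow> real" where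
  "far_intf W c \<rho> u = (\<Sum>w\<in>{w\<in>W. c w \<and> dist (pos w) (pos u) > \<rho>}. P * dist (pos w) (pos u) powr (-\<alpha>))"

definition good :: "nat set \<Rightarrow> real \<Rightarrow> (nat \<Rightarrow> bool) \<Rightarrow> bool" where
  "good W \<rho> c \<longleftrightarrow> (\<forall>u\<in>V. real (card {w\<in>W. c w \<and> dist (pos w) (pos u) \<le> \<rho>}) \<le> x \<and>
                         far_intf W c \<rho> u \<le> \<theta>)"

lemma r_pos: "r > 0"
  using P Nz beta by (simp add: r_def rng_def)

lemma d0_pos: "d0 > 0" using r_pos eps by (simp add: d0_def)

lemma r_powr: "r powr (-\<alpha>) = Nz * \<beta> / P"
proof -
  have "r powr (-\<alpha>) = (P / (Nz * \<beta>)) powr ((1/\<alpha>) * (-\<alpha>))"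
    by (simp add: r_def rng_def powr_powr)
  also have "(1/\<alpha>) * (-\<alpha>) = -1" using alpha by simp
  finally show ?thesis using P Nz beta by (simp add: powr_neg_one)
qed

lemma signal_bound: "P * d0 powr (-\<alpha>) = Nz * \<beta> * (1 - \<epsilon>) powr (-\<alpha>)"
proof -
  have "d0 powr (-\<alpha>) = (1 - \<epsilon>) powr (-\<alpha>) * r powr (-\<alpha>)"
    using eps r_pos by (simp add: d0_def powr_mult)
  thus ?thesis using r_powr P by (simp add: field_simps)
qed

lemma theta_pos: "\<theta> > 0"
proof -
  have "(1 - \<epsilon>) powr \<alpha> < 1" using eps alpha by (subst powr01_less_one) auto
  moreover have "(1 - \<epsilon>) powr \<alpha> > 0" using eps by simp
  ultimately have "(1 - \<epsilon>) powr (-\<alpha>) > 1" by (simp add: powr_minus_divide)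
  thus ?thesis using Nz by (simp add: \<theta>_def)
qed

lemma adj_sym: "adj P \<alpha> Nz \<beta> \<epsilon> pos V u v \<Longrightarrow> adj P \<alpha> Nz \<beta> \<epsilon> pos V v u"
  by (auto simp: adj_def dist_commute)

lemma sinr_ok:
  assumes T: "T \<subseteq> V" and vT: "v \<in> T" and uT: "u \<notin> T" and a: "adj P \<alpha> Nz \<beta> \<epsilon> pos V u v"
    and I: "(\<Sum>w\<in>T - {v}. P * dist (pos w) (pos u) powr (-\<alpha>)) \<le> \<theta>"
  shows "sinr_rcv P \<alpha> Nz \<beta> \<epsilon> pos T u v"
proof -
  define d where "d = dist (pos v) (pos u)"
  have uv: "u \<in> V" "v \<in> V" "u \<noteq> v" and dd: "d \<le> d0" using a by (auto simp: adj_def d_def d0_def r_def dist_commute)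
  have "pos v \<noteq> pos u" using inj uv by (auto dest: inj_onD)
  hence dpos: "d > 0" by (simp add: d_def)
  define Iv where "Iv = (\<Sum>w\<in>T - {v}. P * dist (pos w) (pos u) powr (-\<alpha>))"
  have Iv0: "Iv \<ge> 0" unfolding Iv_def using P by (intro sum_nonneg) simp
  have "\<beta> * (Nz + Iv) \<le> \<beta> * (Nz + \<theta>)" using I beta by (simp add: Iv_def)
  also have "\<dots> = Nz * \<beta> * (1 - \<epsilon>) powr (-\<alpha>)" by (simp add: \<theta>_def algebra_simps)
  also have "\<dots> = P * d0 powr (-\<alpha>)" by (rule signal_bound[symmetric])
  also have "\<dots> \<le> P * d powr (-\<alpha>)"
    using P dpos dd alpha by (intro mult_left_mono powr_neg_antimono) auto
  finally have "\<beta> \<le> P * d powr (-\<alpha>) / (Nz + Iv)" using Nz Iv0 by (simp add: field_simps)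
  thus ?thesis using vT uT dd unfolding sinr_rcv_def Iv_def d_def d0_def r_def by simp
qed

lemma heard:
  assumes W: "W \<subseteq> V" and g: "good W \<rho> c" and rho: "d0 \<le> \<rho>"
    and X: "X \<subseteq> {w\<in>W. c w}" and uV: "u \<in> V" and vX: "v \<in> X"
    and a: "adj P \<alpha> Nz \<beta> \<epsilon> pos V u v"
  shows "v \<in> heard_ssf P \<alpha> Nz \<beta> \<epsilon> pos S X u"
proof -
  define Z where "Z = {w\<in>X. dist (pos w) (pos u) \<le> \<rho>}"
  have finW: "finite W" using W finV finite_subset by blast
  have "Z \<subseteq> {w\<in>W. c w \<and> dist (pos w) (pos u) \<le> \<rho>}" using X by (auto simp: Z_def)
  hence "card Z \<le> card {w\<in>W. c w \<and> dist (pos w) (pos u) \<le> \<rho>}" using finW by (intro card_mono) auto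
  hence cZ: "real (card Z) \<le> x" using g uV unfolding good_def by (meson of_nat_le_iff order_trans)
  have vd: "dist (pos v) (pos u) \<le> d0" using a by (auto simp: adj_def d0_def r_def dist_commute)
  have vZ: "v \<in> Z" using vX vd rho by (simp add: Z_def)
  have ZN: "Z \<subseteq> {1..N}" using X W VN by (auto simp: Z_def)
  obtain j where j: "j < length S" "S ! j \<inter> Z = {v}"
    using ssf vZ ZN cZ unfolding is_ssf_def by blast
  define T where "T = X \<inter> S ! j"
  have TV: "T \<subseteq> V" using X W by (auto simp: T_def)
  have vT: "v \<in> T" using j vZ vX by (auto simp: T_def)
  have uv: "u \<noteq> v" using a by (simp add: adj_def)
  have uT: "u \<notin> T"
  proof
    assume "u \<in> T"
    hence "u \<in> Z" using rho d0_pos by (simp add: T_def Z_def)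
    thus False using \<open>u \<in> T\<close> j uv by (auto simp: T_def)
  qed
  have sub: "T - {v} \<subseteq> {w\<in>W. c w \<and> dist (pos w) (pos u) > \<rho>}"
  proof
    fix w assume w: "w \<in> T - {v}"
    have "\<not> dist (pos w) (pos u) \<le> \<rho>"
    proof
      assume "dist (pos w) (pos u) \<le> \<rho>"
      hence "w \<in> S ! j \<inter> Z" using w by (auto simp: T_def Z_def)
      thus False using j w by auto
    qed
    thus "w \<in> {w\<in>W. c w \<and> dist (pos w) (pos u) > \<rho>}" using w X by (auto simp: T_def)
  qed
  have "(\<Sum>w\<in>T - {v}. P * dist (pos w) (pos u) powr (-\<alpha>)) \<le> far_intf W c \<rho> u"
    unfolding far_intf_def using sub finW P by (intro sum_mono2) auto
  also have "\<dots> \<le> \<theta>" using g uV by (simp add: good_def)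
  finally have "sinr_rcv P \<alpha> Nz \<beta> \<epsilon> pos T u v" by (intro sinr_ok[OF TV vT uT a])
  thus ?thesis using j unfolding heard_ssf_def T_def by blast
qed

end


context sw begin

abbreviation "nocand st \<equiv> (\<forall>u\<in>V. st u \<noteq> Candidate)"

lemma subphase_step:
  assumes W: "W \<subseteq> V" and g: "good W \<rho> c" and rho: "d0 \<le> \<rho>"
    and b: "inv_b P \<alpha> Nz \<beta> \<epsilon> pos V st" and nc: "nocand st"
    and wk: "{v\<in>V. st v = Worker} \<subseteq> W"
  shows "inv_b P \<alpha> Nz \<beta> \<epsilon> pos V (subphase P \<alpha> Nz \<beta> \<epsilon> pos V S st c) \<and>
         nocand (subphase P \<alpha> Nz \<beta> \<epsilon> pos V S st c) \<and>
         {v\<in>V. subphase P \<alpha> Nz \<beta> \<epsilon> pos V S st c v = Worker} \<subseteq> W"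
proof -
  define cand where "cand = {v\<in>V. st v = Worker \<and> c v}"
  define L where "L = {v\<in>cand. heard_ssf P \<alpha> Nz \<beta> \<epsilon> pos S cand v = {}}"
  define st1 where "st1 = (\<lambda>v. if v \<in> L then Leader else st v)"
  define sl where "sl = {u\<in>V. st1 u = Worker \<and> heard_ssf P \<alpha> Nz \<beta> \<epsilon> pos S L u \<noteq> {}}"
  define st' where "st' = (\<lambda>v. if v \<in> sl then Slave else st1 v)"
  have eq: "subphase P \<alpha> Nz \<beta> \<epsilon> pos V S st c = st'"
    unfolding subphase_def Let_def cand_def L_def st1_def sl_def st'_def by simp
  have candW: "cand \<subseteq> {w\<in>W. c w}" using wk by (auto simp: cand_def)
  have LW: "L \<subseteq> {w\<in>W. c w}" using candW by (auto simp: L_def)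
  have Lc: "L \<subseteq> cand" by (auto simp: L_def)
  have ib: "st' u = Slave" if uV: "u \<in> V" and a: "adj P \<alpha> Nz \<beta> \<epsilon> pos V u v" and lv: "st' v = Leader" for u v
  proof -
    have vL: "v \<in> L \<or> st v = Leader" using lv by (auto simp: st'_def st1_def split: if_splits)
    show ?thesis
    proof (cases "st u = Worker")
      case False
      have uL: "u \<notin> L" using False by (auto simp: L_def cand_def)
      from vL show ?thesis
      proof
        assume "v \<in> L"
        hence "st v = Worker" by (auto simp: L_def cand_def)
        hence "st u \<noteq> Leader" using b adj_sym[OF a] a by (auto simp: inv_b_def adj_def)
        hence "st u = Slave" using False nc uV by (cases "st u") auto
        thus ?thesis using uL by (auto simp: st'_def st1_def sl_def)
      next
        assume "st v = Leader"
        hence "st u = Slave" using b uV a by (auto simp: inv_b_def)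
        thus ?thesis using uL by (auto simp: st'_def st1_def sl_def)
      qed
    next
      case True
      have notold: "st v \<noteq> Leader" using b True uV a by (auto simp: inv_b_def)
      hence vL': "v \<in> L" using vL by simp
      have uL: "u \<notin> L"
      proof
        assume uL: "u \<in> L"
        hence "u \<in> cand" by (auto simp: L_def)
        have "v \<in> heard_ssf P \<alpha> Nz \<beta> \<epsilon> pos S cand u"
          by (rule heard[OF W g rho candW uV _ a]) (use vL' Lc in auto)
        thus False using uL by (auto simp: L_def)
      qed
      have "v \<in> heard_ssf P \<alpha> Nz \<beta> \<epsilon> pos S L u"
        by (rule heard[OF W g rho LW uV vL' a])
      hence "u \<in> sl" using uL True uV by (auto simp: sl_def st1_def)
      thus ?thesis by (simp add: st'_def)
    qed
  qed
  have "inv_b P \<alpha> Nz \<beta> \<epsilon> pos V st'" unfolding inv_b_def using ib by blast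
  moreover have "nocand st'" using nc by (auto simp: st'_def st1_def)
  moreover have "{v\<in>V. st' v = Worker} \<subseteq> W"
    using wk by (auto simp: st'_def st1_def split: if_splits)
  ultimately show ?thesis using eq by simp
qed

lemma run_ok:
  assumes W: "W \<subseteq> V" and rho: "d0 \<le> \<rho>" and g: "\<forall>j<n. good W \<rho> (\<lambda>v. co (j, v))"
    and b: "inv_b P \<alpha> Nz \<beta> \<epsilon> pos V st" and nc: "nocand st"
    and wk: "{v\<in>V. st v = Worker} \<subseteq> W"
  shows "inv_b P \<alpha> Nz \<beta> \<epsilon> pos V (run_subphases P \<alpha> Nz \<beta> \<epsilon> pos V S st co n) \<and>
         nocand (run_subphases P \<alpha> Nz \<beta> \<epsilon> pos V S st co n) \<and>
         {v\<in>V. run_subphases P \<alpha> Nz \<beta> \<epsilon> pos V S st co n v = Worker} \<subseteq> W"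
  using g
proof (induction n)
  case 0
  then show ?case using b nc wk by simp
next
  case (Suc n)
  hence IH: "inv_b P \<alpha> Nz \<beta> \<epsilon> pos V (run_subphases P \<alpha> Nz \<beta> \<epsilon> pos V S st co n) \<and>
         nocand (run_subphases P \<alpha> Nz \<beta> \<epsilon> pos V S st co n) \<and>
         {v\<in>V. run_subphases P \<alpha> Nz \<beta> \<epsilon> pos V S st co n v = Worker} \<subseteq> W" by simp
  have "good W \<rho> (\<lambda>v. co (n, v))" using Suc.prems by simp
  thus ?case using subphase_step[OF W _ rho] IH by simp
qed

lemma invc_from_b:
  assumes b: "inv_b P \<alpha> Nz \<beta> \<epsilon> pos V st" and nc: "nocand st"
  shows "inv_c P \<alpha> Nz \<beta> \<epsilon> pos V st"
proof -
  have "card {v. adj P \<alpha> Nz \<beta> \<epsilon> pos V u v \<and> st v = Leader} \<le> 25" if uV: "u \<in> V" for u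
  proof (rule packing25[where q = pos and c = "pos u" and d = d0])
    show "finite {v. adj P \<alpha> Nz \<beta> \<epsilon> pos V u v \<and> st v = Leader}"
      by (rule finite_subset[OF _ finV]) (auto simp: adj_def)
    show "d0 > 0" by (rule d0_pos)
    show "dist (pos w) (pos u) \<le> d0" if "w \<in> {v. adj P \<alpha> Nz \<beta> \<epsilon> pos V u v \<and> st v = Leader}" for w
      using that by (auto simp: adj_def d0_def r_def dist_commute)
    show "dist (pos w) (pos w') > d0"
      if "w \<in> {v. adj P \<alpha> Nz \<beta> \<epsilon> pos V u v \<and> st v = Leader}"
         "w' \<in> {v. adj P \<alpha> Nz \<beta> \<epsilon> pos V u v \<and> st v = Leader}" "w \<noteq> w'" for w w'
    proof (rule ccontr)
      assume "\<not> dist (pos w) (pos w') > d0"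
      hence "adj P \<alpha> Nz \<beta> \<epsilon> pos V w w'" using that by (auto simp: adj_def d0_def r_def)
      hence "st w = Slave" using b that by (auto simp: inv_b_def adj_def)
      thus False using that by simp
    qed
  qed
  thus ?thesis using nc by (simp add: inv_c_def)
qed

end


lemma exists_annulus:
  fixes d \<rho>0 :: real
  assumes "\<rho>0 < d" "d \<le> \<rho>0 * 2^M"
  shows "\<exists>m<M. \<rho>0 * 2^m < d \<and> d \<le> \<rho>0 * 2^Suc m"
proof -
  have ex: "\<exists>m. d \<le> \<rho>0 * 2^Suc m \<and> m < M"
  proof (cases M)
    case 0 then show ?thesis using assms by simp
  next
    case (Suc M') then show ?thesis using assms by auto
  qed
  define m0 where "m0 = (LEAST m. d \<le> \<rho>0 * 2^Suc m)"
  have m0: "d \<le> \<rho>0 * 2^Suc m0" unfolding m0_def using ex by (metis (mono_tags, lifting) LeastI)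
  have m0M: "m0 < M" unfolding m0_def using ex by (meson Least_le order.strict_trans1)
  have lo: "\<rho>0 * 2^m0 < d"
  proof (cases m0)
    case 0 then show ?thesis using assms by simp
  next
    case (Suc m')
    hence "m' < m0" by simp
    hence "\<not> d \<le> \<rho>0 * 2^Suc m'" unfolding m0_def using not_less_Least by blast
    thus ?thesis using Suc by simp
  qed
  show ?thesis using m0 m0M lo by blast
qed

context sw begin

lemma far_bound:
  assumes finW: "finite W" and r0: "\<rho>0 > 0"
    and M: "\<forall>w\<in>W. dist (pos w) (pos u) \<le> \<rho>0 * 2^M"
  shows "far_intf W c \<rho>0 u \<le> (\<Sum>m<M. real (card {w\<in>W. c w \<and> dist (pos w) (pos u) \<le> \<rho>0 * 2^Suc m})
                                   * (P * (\<rho>0 * 2^m) powr (-\<alpha>)))"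
proof -
  define F where "F = {w\<in>W. c w \<and> dist (pos w) (pos u) > \<rho>0}"
  define g where "g = (\<lambda>w m. if dist (pos w) (pos u) \<le> \<rho>0 * 2^Suc m then P * (\<rho>0 * 2^m) powr (-\<alpha>) else 0)"
  have finF: "finite F" using finW by (simp add: F_def)
  have gnn: "g w m \<ge> 0" for w m using P by (simp add: g_def)
  have pt: "P * dist (pos w) (pos u) powr (-\<alpha>) \<le> (\<Sum>m<M. g w m)" if w: "w \<in> F" for w
  proof -
    have "\<rho>0 < dist (pos w) (pos u)" "dist (pos w) (pos u) \<le> \<rho>0 * 2^M" using w M by (auto simp: F_def)
    then obtain m where m: "m < M" "\<rho>0 * 2^m < dist (pos w) (pos u)" "dist (pos w) (pos u) \<le> \<rho>0 * 2^Suc m"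
      using exists_annulus by blast
    have "P * dist (pos w) (pos u) powr (-\<alpha>) \<le> P * (\<rho>0 * 2^m) powr (-\<alpha>)"
      using P m r0 alpha by (intro mult_left_mono powr_neg_antimono) auto
    also have "\<dots> = g w m" using m by (simp add: g_def)
    also have "\<dots> \<le> (\<Sum>m<M. g w m)" using m gnn by (intro member_le_sum) auto
    finally show ?thesis .
  qed
  have "far_intf W c \<rho>0 u = (\<Sum>w\<in>F. P * dist (pos w) (pos u) powr (-\<alpha>))"
    by (simp add: far_intf_def F_def)
  also have "\<dots> \<le> (\<Sum>w\<in>F. \<Sum>m<M. g w m)" by (intro sum_mono pt)
  also have "\<dots> = (\<Sum>m<M. \<Sum>w\<in>F. g w m)" by (rule sum.swap)
  also have "\<dots> \<le> (\<Sum>m<M. real (card {w\<in>W. c w \<and> dist (pos w) (pos u) \<le> \<rho>0 * 2^Suc m})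
                                   * (P * (\<rho>0 * 2^m) powr (-\<alpha>)))"
  proof (intro sum_mono)
    fix m
    have "(\<Sum>w\<in>F. g w m) = (\<Sum>w\<in>{w\<in>F. dist (pos w) (pos u) \<le> \<rho>0 * 2^Suc m}. P * (\<rho>0 * 2^m) powr (-\<alpha>))"
      unfolding g_def using sum.inter_filter[OF finF, of "\<lambda>_. P * (\<rho>0 * 2^m) powr (-\<alpha>)" "\<lambda>w. dist (pos w) (pos u) \<le> \<rho>0 * 2^Suc m"]
      by simp
    also have "\<dots> = real (card {w\<in>F. dist (pos w) (pos u) \<le> \<rho>0 * 2^Suc m}) * (P * (\<rho>0 * 2^m) powr (-\<alpha>))"
      by simp
    also have "\<dots> \<le> real (card {w\<in>W. c w \<and> dist (pos w) (pos u) \<le> \<rho>0 * 2^Suc m}) * (P * (\<rho>0 * 2^m) powr (-\<alpha>))"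
      using finW P by (intro mult_right_mono of_nat_mono card_mono) (auto simp: F_def)
    finally show "(\<Sum>w\<in>F. g w m) \<le> \<dots>" .
  qed
  finally show ?thesis .
qed

definition "s = r / sqrt 2"

lemma s_pos: "s > 0" using r_pos by (simp add: s_def)

lemma mu_bound:
  assumes W: "W \<subseteq> V" and fib: "\<And>b. card {w\<in>W. pivotal_box r (pos w) = b} \<le> m"
    and rho: "\<rho> \<ge> 0"
  shows "real (card {w\<in>W. dist (pos w) (pos u) \<le> \<rho>}) \<le> real m * (2 * \<rho> / s + 2)^2"
proof (rule grid_count[where q = pos and c = "pos u" and t = s])
  show "finite {w\<in>W. dist (pos w) (pos u) \<le> \<rho>}" by (rule finite_subset[of _ V]) (use W finV in auto)
  show "s > 0" by (rule s_pos)
  show "\<rho> \<ge> 0" by (rule rho)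
  show "dist (pos w) (pos u) \<le> \<rho>" if "w \<in> {w\<in>W. dist (pos w) (pos u) \<le> \<rho>}" for w using that by simp
  fix b
  have "{w \<in> {w\<in>W. dist (pos w) (pos u) \<le> \<rho>}. gbox s (pos w) = b} \<subseteq> {w\<in>W. pivotal_box r (pos w) = b}"
    by (auto simp: gbox_def pivotal_box_def s_def)
  hence "card {w \<in> {w\<in>W. dist (pos w) (pos u) \<le> \<rho>}. gbox s (pos w) = b} \<le> card {w\<in>W. pivotal_box r (pos w) = b}"
    by (intro card_mono) (rule finite_subset[of _ V], use W finV in auto)
  thus "card {w \<in> {w\<in>W. dist (pos w) (pos u) \<le> \<rho>}. gbox s (pos w) = b} \<le> m" using fib[of b] by simp
qed

end

lemma slice_tail:
  fixes I :: "(nat \<times> nat) set"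
  assumes fin: "finite I" and AI: "Pair j ` A \<subseteq> I" and p: "0 \<le> p" "p \<le> 1"
    and mu: "6 * (real (card A) * p) \<le> real t"
  shows "measure_pmf.prob (Pi_pmf I False (\<lambda>_. bernoulli_pmf p)) {co. t \<le> card {w\<in>A. co (j, w)}} \<le> (1/2)^t"
proof -
  have finA: "finite A" using fin AI finite_imageD[of "Pair j" A] finite_subset inj_on_def by (metis Pair_inject)
  have ceq: "card {b\<in>Pair j ` A. co b} = card {w\<in>A. co (j, w)}" for co :: "nat\<times>nat \<Rightarrow> bool"
  proof -
    have "{b\<in>Pair j ` A. co b} = Pair j ` {w\<in>A. co (j, w)}" by auto
    thus ?thesis by (simp add: card_image inj_on_def)
  qed
  have cA: "card (Pair j ` A) = card A" by (simp add: card_image inj_on_def)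
  have "measure_pmf.prob (Pi_pmf I False (\<lambda>_. bernoulli_pmf p)) {co. t \<le> card {w\<in>A. co (j, w)}}
      = measure_pmf.prob (Pi_pmf I False (\<lambda>_. bernoulli_pmf p)) {co. t \<le> card {b\<in>Pair j ` A. co b}}"
    by (simp add: ceq)
  also have "\<dots> \<le> real (card (Pair j ` A) choose t) * p ^ t" by (rule tail_bound[OF fin AI p])
  also have "\<dots> = real (card A choose t) * p ^ t" by (simp add: cA)
  also have "\<dots> \<le> (real (card A) ^ t / fact t) * p ^ t"
  proof (intro mult_right_mono)
    have "real (card A choose t) * fact t \<le> real (card A) ^ t"
      using binomial_fact_pow[of "card A" t] by (metis of_nat_fact of_nat_le_iff of_nat_mult of_nat_power)
    thus "real (card A choose t) \<le> real (card A) ^ t / fact t" by (simp add: field_simps)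
  qed (use p in simp)
  also have "\<dots> = (real (card A) * p) ^ t / fact t" by (simp add: power_mult_distrib)
  also have "\<dots> \<le> (1/2)^t" using p mu by (intro poisson_tail) auto
  finally show ?thesis .
qed


lemma geo_powr:
  fixes a \<alpha> :: real and m :: nat assumes "a > 0"
  shows "(a * 2^m) powr (-\<alpha>) * 4^m = a powr (-\<alpha>) * (2 powr (2 - \<alpha>))^m"
proof -
  have e1: "(2::real)^m = 2 powr real m" by (simp add: powr_realpow)
  have e2: "(4::real)^m = 2 powr (2 * real m)"
  proof -
    have "(4::real)^m = 2^(2*m)" by (simp add: power_mult)
    also have "\<dots> = 2 powr (real (2*m))" using powr_realpow[of 2 "2*m"] by simp
    finally show ?thesis by simp
  qed
  have "(a * 2^m) powr (-\<alpha>) * 4^m = a powr (-\<alpha>) * (2 powr (real m * (-\<alpha>)) * 2 powr (2 * real m))"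
    using assms by (simp add: powr_mult e1 e2 powr_powr)
  also have "2 powr (real m * (-\<alpha>)) * 2 powr (2 * real m) = 2 powr ((2 - \<alpha>) * real m)"
    by (simp add: powr_add[symmetric] algebra_simps)
  also have "\<dots> = (2 powr (2 - \<alpha>))^m" by (simp add: powr_powr[symmetric] powr_realpow)
  finally show ?thesis .
qed

lemma geo_sum_le:
  fixes q :: real assumes "0 \<le> q" "q < 1"
  shows "(\<Sum>m<M. q^m) \<le> 1 / (1 - q)"
proof -
  have "(\<Sum>m<M. q^m) = (1 - q^M) / (1 - q)" using assms by (simp add: sum_gp_strict)
  also have "\<dots> \<le> 1 / (1 - q)" using assms by (intro divide_right_mono) auto
  finally show ?thesis .
qed

lemma four_pow_ge: "real m + 1 \<le> (4::real)^m"
  by (induction m) (auto simp: algebra_simps)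


context sw begin

lemma good_from_counts:
  assumes W: "W \<subseteq> V" and R: "R \<ge> 2" and x0: "x \<ge> 0"
    and M: "\<forall>u\<in>V. \<forall>w\<in>V. dist (pos w) (pos u) \<le> s * R * 2^M"
    and near: "\<forall>u\<in>V. card {w\<in>W. c w \<and> dist (pos w) (pos u) \<le> s * R} < nat \<lfloor>x\<rfloor> + 1"
    and farc: "\<forall>u\<in>V. \<forall>m<M. card {w\<in>W. c w \<and> dist (pos w) (pos u) \<le> s * R * 2^Suc m}
                     < nat \<lfloor>216 * R^2 * 4^m\<rfloor> + 1"
    and hth: "216 * R^2 * P * (s * R) powr (-\<alpha>) / (1 - 2 powr (2 - \<alpha>)) \<le> \<theta>"
  shows "good W (s * R) c"
  unfolding good_def
proof
  fix u assume uV: "u \<in> V"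
  have finW: "finite W" using W finV finite_subset by blast
  have rho0: "s * R > 0" using s_pos R by simp
  have "card {w\<in>W. c w \<and> dist (pos w) (pos u) \<le> s * R} \<le> nat \<lfloor>x\<rfloor>" using near uV by auto
  hence "real (card {w\<in>W. c w \<and> dist (pos w) (pos u) \<le> s * R}) \<le> real (nat \<lfloor>x\<rfloor>)" by (simp only: of_nat_le_iff)
  also have "\<dots> \<le> x" using x0 by simp
  finally have n: "real (card {w\<in>W. c w \<and> dist (pos w) (pos u) \<le> s * R}) \<le> x" .
  define q where "q = (2::real) powr (2 - \<alpha>)"
  have q0: "0 \<le> q" by (simp add: q_def)
  have q1: "q < 1" unfolding q_def using alpha by (intro powr_less_one) auto
  have "far_intf W c (s * R) u \<le> (\<Sum>m<M. real (card {w\<in>W. c w \<and> dist (pos w) (pos u) \<le> s * R * 2^Suc m})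
                                   * (P * (s * R * 2^m) powr (-\<alpha>)))"
    by (rule far_bound[OF finW rho0]) (use M W uV in auto)
  also have "\<dots> \<le> (\<Sum>m<M. (216 * R^2 * 4^m) * (P * (s * R * 2^m) powr (-\<alpha>)))"
  proof (intro sum_mono mult_right_mono)
    fix m assume m: "m \<in> {..<M}"
    have "card {w\<in>W. c w \<and> dist (pos w) (pos u) \<le> s * R * 2^Suc m} \<le> nat \<lfloor>216 * R^2 * 4^m\<rfloor>"
      using farc uV m by fastforce
    hence "real (card {w\<in>W. c w \<and> dist (pos w) (pos u) \<le> s * R * 2^Suc m}) \<le> real (nat \<lfloor>216 * R^2 * 4^m\<rfloor>)"
      by (simp only: of_nat_le_iff)
    also have "\<dots> \<le> 216 * R^2 * 4^m" by simp
    finally show "real (card {w\<in>W. c w \<and> dist (pos w) (pos u) \<le> s * R * 2^Suc m}) \<le> 216 * R^2 * 4^m" .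
    show "0 \<le> P * (s * R * 2^m) powr (-\<alpha>)" using P by simp
  qed
  also have "\<dots> = (\<Sum>m<M. 216 * R^2 * P * (s * R) powr (-\<alpha>) * q^m)"
  proof (intro sum.cong refl)
    fix m
    have "(s * R * 2^m) powr (-\<alpha>) * 4^m = (s * R) powr (-\<alpha>) * q^m"
      unfolding q_def by (rule geo_powr[OF rho0])
    thus "216 * R^2 * 4^m * (P * (s * R * 2^m) powr (-\<alpha>)) = 216 * R^2 * P * (s * R) powr (-\<alpha>) * q^m"
      by (simp add: algebra_simps)
  qed
  also have "\<dots> = 216 * R^2 * P * (s * R) powr (-\<alpha>) * (\<Sum>m<M. q^m)"
    by (simp add: sum_distrib_left)
  also have "\<dots> \<le> 216 * R^2 * P * (s * R) powr (-\<alpha>) * (1 / (1 - q))"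
    using P by (intro mult_left_mono geo_sum_le q0 q1) auto
  also have "\<dots> \<le> \<theta>" using hth by (simp add: q_def)
  finally show "real (card {w\<in>W. c w \<and> dist (pos w) (pos u) \<le> s * R}) \<le> x \<and> far_intf W c (s * R) u \<le> \<theta>"
    using n by simp
qed


lemma d0_le: "R \<ge> 2 \<Longrightarrow> d0 \<le> s * R"
proof -
  assume R: "R \<ge> 2"
  have "sqrt 2 \<le> 2" by (rule real_le_lsqrt) auto
  hence "r \<le> 2 * s" using r_pos by (simp add: s_def field_simps)
  also have "\<dots> \<le> s * R" using s_pos R by simp
  finally have "r \<le> s * R" .
  moreover have "d0 \<le> r" using eps r_pos by (simp add: d0_def mult_le_cancel_right1)
  ultimately show ?thesis by simp
qed

lemma card_p_bound:
  assumes W: "W \<subseteq> V" and fib: "\<And>b. card {w\<in>W. pivotal_box r (pos w) = b} \<le> m"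
    and p: "0 \<le> p" "p * real m \<le> 1" and rho: "\<rho> \<ge> 0"
  shows "real (card {w\<in>W. dist (pos w) (pos u) \<le> \<rho>}) * p \<le> (2 * \<rho> / s + 2)^2"
proof -
  have "real (card {w\<in>W. dist (pos w) (pos u) \<le> \<rho>}) * p \<le> real m * (2 * \<rho> / s + 2)^2 * p"
    using mu_bound[OF W fib rho] p by (intro mult_right_mono) auto
  also have "\<dots> = (p * real m) * (2 * \<rho> / s + 2)^2" by simp
  also have "\<dots> \<le> 1 * (2 * \<rho> / s + 2)^2" using p by (intro mult_right_mono) auto
  finally show ?thesis by simp
qed


lemma exists_M: "\<exists>M. \<forall>u\<in>V. \<forall>w\<in>V. dist (pos w) (pos u) \<le> \<rho> * 2^M" if "\<rho> > 0" for \<rho>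
proof -
  define D where "D = Max (insert 0 ((\<lambda>(w,u). dist (pos w) (pos u)) ` (V \<times> V)))"
  have finD: "finite (insert 0 ((\<lambda>(w,u). dist (pos w) (pos u)) ` (V \<times> V)))" using finV by simp
  have Dge: "dist (pos w) (pos u) \<le> D" if "u \<in> V" "w \<in> V" for u w
    unfolding D_def using that by (intro Max_ge[OF finD]) auto
  obtain M where M: "D / \<rho> < 2^M" using real_arch_pow[of 2 "D / \<rho>"] by auto
  have "D \<le> \<rho> * 2^M" using M \<open>\<rho> > 0\<close> by (simp add: divide_less_eq mult.commute)
  thus ?thesis using Dge by (meson order_trans)
qed

lemma main_bound:
  fixes n k m :: nat and p R :: real and st :: "nat \<Rightarrow> status"
  assumes fib: "\<forall>b. card {v\<in>V. st v = Worker \<and> pivotal_box r (pos v) = b} \<le> m"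
    and p: "0 \<le> p" "p \<le> 1" "p * real m \<le> 1"
    and R: "R \<ge> 2" "real k \<le> R"
    and xR: "54 * R^2 \<le> x" and xk: "4 * real k \<le> x"
    and hth: "216 * R^2 * P * (s * R) powr (-\<alpha>) / (1 - 2 powr (2 - \<alpha>)) \<le> \<theta>"
    and b: "inv_b P \<alpha> Nz \<beta> \<epsilon> pos V st" and c: "inv_c P \<alpha> Nz \<beta> \<epsilon> pos V st"
  shows "measure_pmf.prob (Pi_pmf ({..<n} \<times> V) False (\<lambda>_. bernoulli_pmf p))
          {co. inv_b P \<alpha> Nz \<beta> \<epsilon> pos V (run_subphases P \<alpha> Nz \<beta> \<epsilon> pos V S st co n) \<and>
               inv_c P \<alpha> Nz \<beta> \<epsilon> pos V (run_subphases P \<alpha> Nz \<beta> \<epsilon> pos V S st co n)}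
        \<ge> 1 - real n * real (card V) * 3 * (1/2)^(4*k)"
proof -
  define W where "W = {v\<in>V. st v = Worker}"
  have WV: "W \<subseteq> V" by (auto simp: W_def)
  have fibW: "card {w\<in>W. pivotal_box r (pos w) = b} \<le> m" for b
  proof -
    have "{w\<in>W. pivotal_box r (pos w) = b} = {v\<in>V. st v = Worker \<and> pivotal_box r (pos v) = b}"
      by (auto simp: W_def)
    thus ?thesis using spec[OF fib, of b] by (simp only:)
  qed
  have sR: "s * R > 0" using s_pos R by simp
  obtain M where M: "\<forall>u\<in>V. \<forall>w\<in>V. dist (pos w) (pos u) \<le> s * R * 2^M" using exists_M[OF sR] by blast
  define I where "I = {..<n} \<times> V"
  define Mp where "Mp = Pi_pmf I False (\<lambda>_. bernoulli_pmf p)"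
  have finI: "finite I" using finV by (simp add: I_def)
  define A0 where "A0 = (\<lambda>u. {w\<in>W. dist (pos w) (pos u) \<le> s * R})"
  define Am where "Am = (\<lambda>u (mm::nat). {w\<in>W. dist (pos w) (pos u) \<le> s * R * 2^Suc mm})"
  define tN where "tN = nat \<lfloor>x\<rfloor> + 1"
  define tm where "tm = (\<lambda>mm::nat. nat \<lfloor>216 * R^2 * 4^mm\<rfloor> + 1)"
  define E0 where "E0 = (\<lambda>(j::nat) (u::nat). {co::nat\<times>nat\<Rightarrow>bool. tN \<le> card {w\<in>A0 u. co (j, w)}})"
  define Em where "Em = (\<lambda>(j::nat) (u::nat) (mm::nat). {co::nat\<times>nat\<Rightarrow>bool. tm mm \<le> card {w\<in>Am u mm. co (j, w)}})"
  define Bad where "Bad = (\<Union>j<n. \<Union>u\<in>V. (E0 j u \<union> (\<Union>mm<M. Em j u mm)))"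
  define Good where "Good = {co. inv_b P \<alpha> Nz \<beta> \<epsilon> pos V (run_subphases P \<alpha> Nz \<beta> \<epsilon> pos V S st co n) \<and>
               inv_c P \<alpha> Nz \<beta> \<epsilon> pos V (run_subphases P \<alpha> Nz \<beta> \<epsilon> pos V S st co n)}"
  have "0 \<le> 54 * R^2" by simp
  hence x0: "x \<ge> 0" using xR by linarith
  have "(2::real)^2 \<le> R^2" using R by (intro power_mono) auto
  hence R2: "R^2 \<ge> 4" by simp
  have cover: "co \<in> Good" if nb: "co \<notin> Bad" for co
  proof -
    have g: "\<forall>j<n. good W (s * R) (\<lambda>v. co (j, v))"
    proof (intro allI impI)
      fix j assume j: "j < n"
      show "good W (s * R) (\<lambda>v. co (j, v))"
      proof (rule good_from_counts[OF WV R(1) x0 M _ _ hth])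
        show "\<forall>u\<in>V. card {w\<in>W. co (j, w) \<and> dist (pos w) (pos u) \<le> s * R} < nat \<lfloor>x\<rfloor> + 1"
        proof
          fix u assume u: "u \<in> V"
          have "co \<notin> E0 j u" using nb j u by (auto simp: Bad_def)
          moreover have "{w\<in>W. co (j, w) \<and> dist (pos w) (pos u) \<le> s * R} = {w\<in>A0 u. co (j, w)}"
            by (auto simp: A0_def)
          ultimately show "card {w\<in>W. co (j, w) \<and> dist (pos w) (pos u) \<le> s * R} < nat \<lfloor>x\<rfloor> + 1"
            by (simp add: E0_def tN_def)
        qed
        show "\<forall>u\<in>V. \<forall>mm<M. card {w\<in>W. co (j, w) \<and> dist (pos w) (pos u) \<le> s * R * 2^Suc mm}
                     < nat \<lfloor>216 * R^2 * 4^mm\<rfloor> + 1"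
        proof (intro ballI allI impI)
          fix u mm assume u: "u \<in> V" and mm: "mm < M"
          have "co \<notin> Em j u mm" using nb j u mm by (auto simp: Bad_def)
          moreover have "{w\<in>W. co (j, w) \<and> dist (pos w) (pos u) \<le> s * R * 2^Suc mm} = {w\<in>Am u mm. co (j, w)}"
            by (auto simp: Am_def)
          ultimately show "card {w\<in>W. co (j, w) \<and> dist (pos w) (pos u) \<le> s * R * 2^Suc mm}
                     < nat \<lfloor>216 * R^2 * 4^mm\<rfloor> + 1"
            by (simp add: Em_def tm_def)
        qed
      qed
    qed
    have wk: "{v\<in>V. st v = Worker} \<subseteq> W" by (simp add: W_def)
    have nc: "nocand st" using c by (simp add: inv_c_def)
    have "inv_b P \<alpha> Nz \<beta> \<epsilon> pos V (run_subphases P \<alpha> Nz \<beta> \<epsilon> pos V S st co n) \<and>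
          nocand (run_subphases P \<alpha> Nz \<beta> \<epsilon> pos V S st co n)"
      using run_ok[OF WV d0_le[OF R(1)] g b nc wk] by simp
    thus ?thesis using invc_from_b by (simp add: Good_def)
  qed
  have pE0: "measure_pmf.prob Mp (E0 j u) \<le> (1/2)^(4*k)" if j: "j < n" and u: "u \<in> V" for j u
  proof -
    have AI: "Pair j ` A0 u \<subseteq> I" using j WV by (auto simp: I_def A0_def)
    have "real (card (A0 u)) * p \<le> (2 * (s * R) / s + 2)^2"
      unfolding A0_def by (rule card_p_bound[OF WV fibW p(1) p(3)]) (use sR in simp)
    also have "2 * (s * R) / s + 2 = 2 * R + 2" using s_pos by simp
    also have "(2 * R + 2)^2 \<le> (3 * R)^2" using R by (intro power_mono) auto
    finally have "6 * (real (card (A0 u)) * p) \<le> 54 * R^2" by (simp add: power_mult_distrib mult.commute)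
    also have "\<dots> \<le> real tN" using xR unfolding tN_def by linarith
    finally have mu: "6 * (real (card (A0 u)) * p) \<le> real tN" .
    have "measure_pmf.prob Mp (E0 j u) \<le> (1/2)^tN"
      unfolding Mp_def E0_def by (rule slice_tail[OF finI AI p(1) p(2) mu])
    also have "\<dots> \<le> (1/2)^(4*k)"
    proof (rule power_decreasing)
      show "4 * k \<le> tN" using xk unfolding tN_def by linarith
    qed auto
    finally show ?thesis .
  qed
  have pEm: "measure_pmf.prob Mp (Em j u mm) \<le> (1/2)^(4*k) * (1/2)^mm" if j: "j < n" and u: "u \<in> V" for j u mm
  proof -
    have AI: "Pair j ` Am u mm \<subseteq> I" using j WV by (auto simp: I_def Am_def)
    have "real (card (Am u mm)) * p \<le> (2 * (s * R * 2^Suc mm) / s + 2)^2"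
      unfolding Am_def by (rule card_p_bound[OF WV fibW p(1) p(3)]) (use sR in simp)
    also have "2 * (s * R * 2^Suc mm) / s + 2 = 2 * R * 2^Suc mm + 2" using s_pos by simp
    also have "(2 * R * 2^Suc mm + 2)^2 \<le> (3 * R * 2^Suc mm)^2"
    proof (intro power_mono)
      have o: "(1::real) \<le> 2^Suc mm" by (rule one_le_power) simp
      have "2 * 1 \<le> R * 2^Suc mm" by (rule mult_mono) (use R o in auto)
      hence "2 \<le> R * 2^Suc mm" by simp
      thus "2 * R * 2^Suc mm + 2 \<le> 3 * R * 2^Suc mm" by simp
      show "0 \<le> 2 * R * 2^Suc mm + 2" using R by simp
    qed
    also have "(3 * R * 2^Suc mm)^2 = 36 * R^2 * 4^mm"
    proof -
      have "((2::real)^Suc mm)^2 = 4 * 4^mm"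
        by (simp add: power_mult[symmetric] power_mult_distrib mult.commute[of _ 2] power_mult)
      thus ?thesis by (simp add: power_mult_distrib)
    qed
    finally have "6 * (real (card (Am u mm)) * p) \<le> 216 * R^2 * 4^mm" by (simp add: algebra_simps)
    also have "\<dots> \<le> real (tm mm)" unfolding tm_def by linarith
    finally have mu: "6 * (real (card (Am u mm)) * p) \<le> real (tm mm)" .
    have "measure_pmf.prob Mp (Em j u mm) \<le> (1/2)^(tm mm)"
      unfolding Mp_def Em_def by (rule slice_tail[OF finI AI p(1) p(2) mu])
    also have "\<dots> \<le> (1/2)^(4*k + mm)"
    proof (rule power_decreasing)
      have "real mm + 1 \<le> 4^mm" by (rule four_pow_ge)
      hence "216 * R^2 * (real mm + 1) \<le> 216 * R^2 * 4^mm" by (intro mult_left_mono) (use R2 in auto)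
      moreover have "4 * real k + real mm \<le> 216 * R^2 * (real mm + 1)"
      proof -
        have a: "2 * R \<le> R^2" using R by (simp add: power2_eq_square mult_right_mono)
        have b: "1 * real mm \<le> R^2 * real mm" by (rule mult_right_mono) (use R2 in auto)
        have e: "216 * R^2 * (real mm + 1) = 216 * (R^2 * real mm) + 216 * R^2" by (simp add: algebra_simps)
        show ?thesis using a b e R by linarith
      qed
      ultimately have "real (4 * k + mm) \<le> 216 * R^2 * 4^mm" by simp
      thus "4 * k + mm \<le> tm mm" unfolding tm_def by linarith
    qed auto
    also have "\<dots> = (1/2)^(4*k) * (1/2)^mm" by (simp add: power_add)
    finally show ?thesis .
  qed
  have pBad: "measure_pmf.prob Mp Bad \<le> real n * real (card V) * 3 * (1/2)^(4*k)"
  proof -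
    have "measure_pmf.prob Mp Bad \<le> (\<Sum>j<n. measure_pmf.prob Mp (\<Union>u\<in>V. (E0 j u \<union> (\<Union>mm<M. Em j u mm))))"
      unfolding Bad_def by (rule measure_pmf.finite_measure_subadditive_finite) auto
    also have "\<dots> \<le> (\<Sum>j<n. \<Sum>u\<in>V. 3 * (1/2)^(4*k))"
    proof (intro sum_mono)
      fix j assume j: "j \<in> {..<n}"
      have "measure_pmf.prob Mp (\<Union>u\<in>V. (E0 j u \<union> (\<Union>mm<M. Em j u mm)))
            \<le> (\<Sum>u\<in>V. measure_pmf.prob Mp (E0 j u \<union> (\<Union>mm<M. Em j u mm)))"
        by (rule measure_pmf.finite_measure_subadditive_finite) (auto simp: finV)
      also have "\<dots> \<le> (\<Sum>u\<in>V. 3 * (1/2)^(4*k))"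
      proof (intro sum_mono)
        fix u assume u: "u \<in> V"
        have "measure_pmf.prob Mp (E0 j u \<union> (\<Union>mm<M. Em j u mm))
              \<le> measure_pmf.prob Mp (E0 j u) + measure_pmf.prob Mp (\<Union>mm<M. Em j u mm)"
          by (rule measure_subadditive) (auto simp: measure_pmf.emeasure_eq_measure)
        also have "measure_pmf.prob Mp (\<Union>mm<M. Em j u mm) \<le> (\<Sum>mm<M. measure_pmf.prob Mp (Em j u mm))"
          by (rule measure_pmf.finite_measure_subadditive_finite) auto
        also have "\<dots> \<le> (\<Sum>mm<M. (1/2)^(4*k) * (1/2)^mm)"
          using j u by (intro sum_mono pEm) auto
        also have "\<dots> = (1/2)^(4*k) * (\<Sum>mm<M. (1/2)^mm)" by (simp add: sum_distrib_left)
        also have "\<dots> \<le> (1/2)^(4*k) * 2"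
        proof (intro mult_left_mono)
          have "(\<Sum>mm<M. (1/2::real)^mm) \<le> 1 / (1 - 1/2)" by (rule geo_sum_le) auto
          thus "(\<Sum>mm<M. (1/2::real)^mm) \<le> 2" by simp
        qed auto
        finally have "measure_pmf.prob Mp (E0 j u \<union> (\<Union>mm<M. Em j u mm))
              \<le> measure_pmf.prob Mp (E0 j u) + (1/2)^(4*k) * 2" by simp
        also have "\<dots> \<le> (1/2)^(4*k) + (1/2)^(4*k) * 2" using pE0 j u by simp
        finally show "measure_pmf.prob Mp (E0 j u \<union> (\<Union>mm<M. Em j u mm)) \<le> 3 * (1/2)^(4*k)" by simp
      qed
      finally show "measure_pmf.prob Mp (\<Union>u\<in>V. (E0 j u \<union> (\<Union>mm<M. Em j u mm))) \<le> (\<Sum>u\<in>V. 3 * (1/2)^(4*k))" .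
    qed
    also have "\<dots> = real n * real (card V) * 3 * (1/2)^(4*k)" by simp
    finally show ?thesis .
  qed
  have "1 = measure_pmf.prob Mp (Good \<union> Bad)"
  proof -
    have "Good \<union> Bad = UNIV" using cover by blast
    thus ?thesis by simp
  qed
  also have "\<dots> \<le> measure_pmf.prob Mp Good + measure_pmf.prob Mp Bad"
    by (rule measure_subadditive) (auto simp: measure_pmf.emeasure_eq_measure)
  finally have "measure_pmf.prob Mp Good \<ge> 1 - measure_pmf.prob Mp Bad" by simp
  thus ?thesis using pBad unfolding Mp_def I_def Good_def by linarith
qed

end


lemma hth_lemma:
  fixes s P \<alpha> \<theta> R :: real
  assumes s: "s > 0" and P: "P > 0" and a: "\<alpha> > 2" and th: "\<theta> > 0"
    and R: "R \<ge> max 2 ((\<theta> / (216 * P * s powr (-\<alpha>) / (1 - 2 powr (2 - \<alpha>)))) powr (1 / (2 - \<alpha>)))"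
  shows "216 * R^2 * P * (s * R) powr (-\<alpha>) / (1 - 2 powr (2 - \<alpha>)) \<le> \<theta>"
proof -
  define q where "q = (2::real) powr (2 - \<alpha>)"
  have q1: "q < 1" unfolding q_def using a by (intro powr_less_one) auto
  define Cst where "Cst = 216 * P * s powr (-\<alpha>) / (1 - q)"
  have Cpos: "Cst > 0" using q1 P s by (simp add: Cst_def)
  define \<eta> where "\<eta> = \<theta> / Cst"
  have eta: "\<eta> > 0" using th Cpos by (simp add: \<eta>_def)
  define R1 where "R1 = \<eta> powr (1 / (2 - \<alpha>))"
  have R1pos: "R1 > 0" using eta by (simp add: R1_def)
  have RR1: "R1 \<le> R" and R2: "R \<ge> 2" using R by (simp_all add: R1_def \<eta>_def Cst_def q_def)
  have Rpos: "R > 0" using R2 by simp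
  have "R^2 * (s * R) powr (-\<alpha>) = s powr (-\<alpha>) * (R powr 2 * R powr (-\<alpha>))"
    using s Rpos by (simp add: powr_mult powr_numeral)
  also have "R powr 2 * R powr (-\<alpha>) = R powr (2 - \<alpha>)" by (simp add: powr_add[symmetric])
  finally have e: "216 * R^2 * P * (s * R) powr (-\<alpha>) / (1 - 2 powr (2 - \<alpha>)) = Cst * R powr (2 - \<alpha>)"
    by (simp add: Cst_def q_def)
  have "R powr (-(\<alpha> - 2)) \<le> R1 powr (-(\<alpha> - 2))" using R1pos RR1 a by (intro powr_neg_antimono) auto
  hence "R powr (2 - \<alpha>) \<le> R1 powr (2 - \<alpha>)" by simp
  also have "R1 powr (2 - \<alpha>) = \<eta>"
  proof -
    have "R1 powr (2 - \<alpha>) = \<eta> powr (1 / (2 - \<alpha>) * (2 - \<alpha>))" by (simp add: R1_def powr_powr)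
    also have "1 / (2 - \<alpha>) * (2 - \<alpha>) = 1" using a by simp
    finally show ?thesis using eta by simp
  qed
  finally have "Cst * R powr (2 - \<alpha>) \<le> Cst * \<eta>" using Cpos by simp
  also have "Cst * \<eta> = \<theta>" using Cpos by (simp add: \<eta>_def)
  finally show ?thesis using e by simp
qed


theorem lemma4:
  fixes P \<alpha> Nz \<beta> \<epsilon> :: real
  assumes "P > 0" and "\<alpha> > 2" and "Nz > 0" and "\<beta> \<ge> 1" and "0 < \<epsilon>" and "\<epsilon> < 1"
  shows "\<exists>c1\<^sub>0 C\<^sub>0 :: nat. \<forall>c1 C :: nat. c1 \<ge> c1\<^sub>0 \<longrightarrow> C \<ge> C\<^sub>0 \<longrightarrow>
    (\<forall>Lc :: real. \<exists>K :: real.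
      \<forall>(k :: nat) (d :: nat) (i :: nat) (V :: nat set) (pos :: nat \<Rightarrow> real \<times> real)
        (st :: nat \<Rightarrow> status) (S :: nat set list).
        V \<noteq> {} \<longrightarrow> V \<subseteq> {1..2^k} \<longrightarrow> inj_on pos V \<longrightarrow>
        max_degree P \<alpha> Nz \<beta> \<epsilon> pos V = 2^d \<longrightarrow> i < d \<longrightarrow>
        is_ssf (2^k) (real c1 * real k ^ 3) S \<longrightarrow> real (length S) \<le> Lc * real k ^ 7 \<longrightarrow>
        inv_a P \<alpha> Nz \<beta> pos V (2^d div 2^i) st \<longrightarrow>
        inv_b P \<alpha> Nz \<beta> \<epsilon> pos V st \<longrightarrow>
        inv_c P \<alpha> Nz \<beta> \<epsilon> pos V st \<longrightarrow>
        measure_pmf.prob (Pi_pmf ({..<C * k} \<times> V) False (\<lambda>_. bernoulli_pmf (2^i / 2^d)))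
          {co. inv_b P \<alpha> Nz \<beta> \<epsilon> pos V (run_subphases P \<alpha> Nz \<beta> \<epsilon> pos V S st co (C * k)) \<and>
               inv_c P \<alpha> Nz \<beta> \<epsilon> pos V (run_subphases P \<alpha> Nz \<beta> \<epsilon> pos V S st co (C * k))}
        \<ge> 1 - K * real k / real (card V) ^ 3)"
proof -
  note P = assms(1) and alpha = assms(2) and Nz = assms(3) and beta = assms(4) and eps = assms(5,6)
  define s0 where "s0 = rng P \<alpha> Nz \<beta> / sqrt 2"
  define \<theta>0 where "\<theta>0 = Nz * ((1 - \<epsilon>) powr (-\<alpha>) - 1)"
  define R1 where "R1 = max 2 ((\<theta>0 / (216 * P * s0 powr (-\<alpha>) / (1 - 2 powr (2 - \<alpha>)))) powr (1 / (2 - \<alpha>)))"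
  have s0: "s0 > 0" using P Nz beta by (simp add: s0_def rng_def)
  have th0: "\<theta>0 > 0"
  proof -
    have "(1 - \<epsilon>) powr \<alpha> < 1" using eps alpha by (subst powr01_less_one) auto
    moreover have "(1 - \<epsilon>) powr \<alpha> > 0" using eps by simp
    ultimately have "(1 - \<epsilon>) powr (-\<alpha>) > 1" by (simp add: powr_minus_divide)
    thus ?thesis using Nz by (simp add: \<theta>0_def)
  qed
  have R1_2: "R1 \<ge> 2" by (simp add: R1_def)
  define c10 where "c10 = nat \<lceil>54 * (R1 + 1)^2\<rceil>"
  show ?thesis
  proof (intro exI[of _ c10] exI[of _ "0::nat"] allI impI)
    fix c1 C :: nat and Lc :: real
    assume c1: "c1 \<ge> c10"
    have c1R: "real c1 \<ge> 54 * (R1 + 1)^2"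
    proof -
      have "54 * (R1 + 1)^2 \<le> real c10" unfolding c10_def by linarith
      thus ?thesis using c1 by linarith
    qed
    show "\<exists>K :: real.
      \<forall>(k :: nat) (d :: nat) (i :: nat) (V :: nat set) (pos :: nat \<Rightarrow> real \<times> real)
        (st :: nat \<Rightarrow> status) (S :: nat set list).
        V \<noteq> {} \<longrightarrow> V \<subseteq> {1..2^k} \<longrightarrow> inj_on pos V \<longrightarrow>
        max_degree P \<alpha> Nz \<beta> \<epsilon> pos V = 2^d \<longrightarrow> i < d \<longrightarrow>
        is_ssf (2^k) (real c1 * real k ^ 3) S \<longrightarrow> real (length S) \<le> Lc * real k ^ 7 \<longrightarrow>
        inv_a P \<alpha> Nz \<beta> pos V (2^d div 2^i) st \<longrightarrow>
        inv_b P \<alpha> Nz \<beta> \<epsilon> pos V st \<longrightarrow>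
        inv_c P \<alpha> Nz \<beta> \<epsilon> pos V st \<longrightarrow>
        measure_pmf.prob (Pi_pmf ({..<C * k} \<times> V) False (\<lambda>_. bernoulli_pmf (2^i / 2^d)))
          {co. inv_b P \<alpha> Nz \<beta> \<epsilon> pos V (run_subphases P \<alpha> Nz \<beta> \<epsilon> pos V S st co (C * k)) \<and>
               inv_c P \<alpha> Nz \<beta> \<epsilon> pos V (run_subphases P \<alpha> Nz \<beta> \<epsilon> pos V S st co (C * k))}
        \<ge> 1 - K * real k / real (card V) ^ 3"
    proof (intro exI[of _ "3 * real C"] allI impI)
      fix k d i :: nat and V :: "nat set" and pos :: "nat \<Rightarrow> real \<times> real" and st S
      assume Vne: "V \<noteq> {}" and VN: "V \<subseteq> {1..2^k}" and inj: "inj_on pos V"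
        and md: "max_degree P \<alpha> Nz \<beta> \<epsilon> pos V = 2^d" and id: "i < d"
        and ssf: "is_ssf (2^k) (real c1 * real k ^ 3) S" and len: "real (length S) \<le> Lc * real k ^ 7"
        and ia: "inv_a P \<alpha> Nz \<beta> pos V (2^d div 2^i) st"
        and ib: "inv_b P \<alpha> Nz \<beta> \<epsilon> pos V st" and ic: "inv_c P \<alpha> Nz \<beta> \<epsilon> pos V st"
      let ?G = "{co. inv_b P \<alpha> Nz \<beta> \<epsilon> pos V (run_subphases P \<alpha> Nz \<beta> \<epsilon> pos V S st co (C * k)) \<and>
               inv_c P \<alpha> Nz \<beta> \<epsilon> pos V (run_subphases P \<alpha> Nz \<beta> \<epsilon> pos V S st co (C * k))}"
      let ?M = "Pi_pmf ({..<C * k} \<times> V) False (\<lambda>_. bernoulli_pmf ((2::real)^i / 2^d))"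
      show "measure_pmf.prob ?M ?G \<ge> 1 - 3 * real C * real k / real (card V) ^ 3"
      proof (cases "k = 0")
        case True
        hence "?G = UNIV" using ib ic by simp
        thus ?thesis using True by simp
      next
        case False
        hence k1: "k \<ge> 1" by simp
        have finV: "finite V" using VN finite_subset by blast
        interpret sw P \<alpha> Nz \<beta> \<epsilon> pos V S "2^k" "real c1 * real k ^ 3"
          by unfold_locales (use P alpha Nz beta eps finV inj VN ssf in auto)
        define R where "R = R1 + real k"
        define p where "p = (2::real)^i / 2^d"
        define m where "m = (2::nat)^d div 2^i"
        have mpow: "m = 2^(d - i)" unfolding m_def using id by (simp add: power_diff)
        have pm: "p * real m = 1"
        proof -
          have "(2::real)^d = 2^i * 2^(d-i)" using id by (simp add: power_add[symmetric])
          thus ?thesis by (simp add: p_def mpow)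
        qed
        have p0: "0 \<le> p" by (simp add: p_def)
        have p1: "p \<le> 1" unfolding p_def using id by (simp add: power_increasing)
        have fib: "\<forall>b. card {v\<in>V. st v = Worker \<and> pivotal_box r (pos v) = b} \<le> m"
          using ia by (simp add: inv_a_def r_def m_def)
        have R2: "R \<ge> 2" "real k \<le> R" using R1_2 by (simp_all add: R_def)
        have xR: "54 * R^2 \<le> real c1 * real k ^ 3"
        proof -
          have "R \<le> (R1 + 1) * real k" using k1 R1_2 by (simp add: R_def algebra_simps)
          hence "R^2 \<le> ((R1 + 1) * real k)^2" using R2 by (intro power_mono) auto
          also have "\<dots> = (R1 + 1)^2 * real k ^ 2" by (simp add: power_mult_distrib)
          also have "\<dots> \<le> (R1 + 1)^2 * real k ^ 3"
            using k1 by (intro mult_left_mono power_increasing) auto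
          finally have "54 * R^2 \<le> 54 * (R1 + 1)^2 * real k ^ 3" by simp
          also have "\<dots> \<le> real c1 * real k ^ 3" using c1R by (intro mult_right_mono) auto
          finally show ?thesis .
        qed
        have xk: "4 * real k \<le> real c1 * real k ^ 3"
        proof -
          have a: "2 * R \<le> R^2" using R2 by (simp add: power2_eq_square mult_right_mono)
          have "4 * real k \<le> 54 * R^2" using a R2 by linarith
          thus ?thesis using xR by linarith
        qed
        have hth: "216 * R^2 * P * (s * R) powr (-\<alpha>) / (1 - 2 powr (2 - \<alpha>)) \<le> \<theta>"
        proof -
          have "s = s0" by (simp add: s_def s0_def r_def)
          moreover have "\<theta> = \<theta>0" by (simp add: \<theta>_def \<theta>0_def)
          moreover have "216 * R^2 * P * (s0 * R) powr (-\<alpha>) / (1 - 2 powr (2 - \<alpha>)) \<le> \<theta>0"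
            by (rule hth_lemma[OF s0 P alpha th0]) (use R1_2 in \<open>simp add: R_def R1_def\<close>)
          ultimately show ?thesis by simp
        qed
        have mb: "measure_pmf.prob (Pi_pmf ({..<C * k} \<times> V) False (\<lambda>_. bernoulli_pmf p)) ?G
                  \<ge> 1 - real (C * k) * real (card V) * 3 * (1/2)^(4*k)"
          by (rule main_bound[OF fib p0 p1 pm[THEN eq_refl] R2 xR xk hth ib ic])
        have n0: "real (card V) > 0" using Vne finV by (simp add: card_gt_0_iff)
        have nk: "real (card V) \<le> 2^k"
        proof -
          have "card V \<le> card {1..(2::nat)^k}" using VN by (intro card_mono) auto
          thus ?thesis by simp
        qed
        have "real (C * k) * real (card V) * 3 * (1/2)^(4*k) \<le> 3 * real C * real k / real (card V) ^ 3"
        proof -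
          have "real (card V) ^ 4 \<le> (2^k)^4" using nk n0 by (intro power_mono) auto
          also have "((2::real)^k)^4 = 2^(4*k)" by (simp add: power_mult[symmetric] mult.commute)
          finally have h: "real (card V) ^ 4 \<le> 2^(4*k)" .
          have e: "(1/2::real)^(4*k) = 1 / 2^(4*k)" by (rule power_one_over)
          have n4: "real (card V) ^ 4 * (1/2)^(4*k) \<le> 1"
            unfolding e using h by (simp add: pos_divide_le_eq)
          have "real (C * k) * real (card V) * 3 * (1/2)^(4*k)
                = 3 * real C * real k / real (card V) ^ 3 * (real (card V) ^ 4 * (1/2)^(4*k))"
            using n0 by (simp add: field_simps power_Suc[symmetric] eval_nat_numeral)
          also have "\<dots> \<le> 3 * real C * real k / real (card V) ^ 3 * 1"
            using n4 n0 by (intro mult_left_mono) auto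
          finally show ?thesis by simp
        qed
        thus ?thesis using mb unfolding p_def by linarith
      qed
    qed
  qed
qed


end
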